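(* Let $n$ and $k$ be positive integers with $k \le n$, let $M$ be a matroid of rank $n$ with rank function $r$, and let $B_1, \dots, B_k$ be bases of $M$ (not necessarily disjoint). Let $\alpha = 3\lceil \log n\rceil$. Let $Q(B_1,\dots,B_k)$ denote the probability that, when $\alpha$-element subsets $S_1 \subseteq B_1, \dots, S_k \subseteq B_k$ are chosen independently, each uniformly at random, one has $r(S_1 \cup \cdots \cup S_k) < k$. Let $Q_{k,n}$ denote the probability that, when $\alpha$-element subsets $S_1, \dots, S_k$ of $\{1,\dots,n\}$ are chosen independently and uniformly at random, one has $|S_1 \cup \cdots \cup S_k| < k$. Then $Q(B_1,\dots,B_k) \le Q_{k,n}$.
   Context: Here $\log$ denotes the natural logarithm. *)

theory Defs
  imports Complex_Main "HOL-Library.FuncSet"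
begin

definition matroid :: "'a set \<Rightarrow> ('a set \<Rightarrow> bool) \<Rightarrow> bool" where
  "matroid E indep \<longleftrightarrow>
     finite E \<and>
     (\<forall>X. indep X \<longrightarrow> X \<subseteq> E) \<and>
     indep {} \<and>
     (\<forall>X Y. indep Y \<and> X \<subseteq> Y \<longrightarrow> indep X) \<and>
     (\<forall>X Y. indep X \<and> indep Y \<and> card X < card Y \<longrightarrow> (\<exists>y \<in> Y - X. indep (insert y X)))"

definition mrank :: "('a set \<Rightarrow> bool) \<Rightarrow> 'a set \<Rightarrow> nat" where
  "mrank indep X = Max {card I | I. I \<subseteq> X \<and> indep I}"

definition mbasis :: "('a set \<Rightarrow> bool) \<Rightarrow> 'a set \<Rightarrow> bool" where
  "mbasis indep B \<longleftrightarrow> indep B \<and> (\<forall>C. indep C \<and> B \<subseteq> C \<longrightarrow> C = B)"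

definition alpha :: "nat \<Rightarrow> nat" where
  "alpha n = 3 * nat \<lceil>ln (real n)\<rceil>"

text \<open>Probability that P holds for a uniformly random tuple (S_0,...,S_{k-1}) with S_i
  chosen independently and uniformly from C i (uniform measure on the finite product).\<close>
definition tuple_prob :: "nat \<Rightarrow> (nat \<Rightarrow> 'b set set) \<Rightarrow> ((nat \<Rightarrow> 'b set) \<Rightarrow> bool) \<Rightarrow> real" where
  "tuple_prob k C P =
     real (card {S \<in> PiE {..<k} C. P S}) / real (card (PiE {..<k} C))"

definition Q_matroid :: "('a set \<Rightarrow> bool) \<Rightarrow> (nat \<Rightarrow> 'a set) \<Rightarrow> nat \<Rightarrow> nat \<Rightarrow> real" where
  "Q_matroid indep B k a =
     tuple_prob k (\<lambda>i. {S. S \<subseteq> B i \<and> card S = a}) (\<lambda>S. mrank indep (\<Union>i<k. S i) < k)"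

definition Q_uniform :: "nat \<Rightarrow> nat \<Rightarrow> nat \<Rightarrow> real" where
  "Q_uniform k n a =
     tuple_prob k (\<lambda>i. {S. S \<subseteq> {1..n} \<and> card S = a}) (\<lambda>S. card (\<Union>i<k. S i) < k)"

end

theory Submission imports Defs begin

lemma mrank_set_fin:
  assumes "matroid E indep"
  shows "finite {card I | I. I \<subseteq> X \<and> indep I}"
proof -
  have "{card I | I. I \<subseteq> X \<and> indep I} \<subseteq> {0..card E}"
    using assms unfolding matroid_def by (auto intro!: card_mono)
  then show ?thesis using finite_subset by blast
qed

lemma mrank_ge:
  assumes "matroid E indep" "I \<subseteq> X" "indep I"
  shows "card I \<le> mrank indep X"
  unfolding mrank_def using assms mrank_set_fin[OF assms(1)] by (intro Max_ge) auto

lemma mrank_obtain: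
  assumes "matroid E indep"
  obtains I where "I \<subseteq> X" "indep I" "card I = mrank indep X"
proof -
  have ne: "{card I | I. I \<subseteq> X \<and> indep I} \<noteq> {}"
    using assms unfolding matroid_def by auto
  have "mrank indep X \<in> {card I | I. I \<subseteq> X \<and> indep I}"
    unfolding mrank_def using Max_in[OF mrank_set_fin[OF assms] ne] .
  then show ?thesis using that by auto
qed

lemma indep_card_le:
  assumes "matroid E indep" "indep I"
  shows "card I \<le> mrank indep E"
  using mrank_ge[OF assms(1) _ assms(2)] assms unfolding matroid_def by auto

lemma basis_card:
  assumes "matroid E indep" "mbasis indep B"
  shows "card B = mrank indep E"
proof (rule ccontr)
  obtain J where J: "J \<subseteq> E" "indep J" "card J = mrank indep E"
    using mrank_obtain[OF assms(1)] by blast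
  have iB: "indep B" using assms(2) unfolding mbasis_def by auto
  assume "card B \<noteq> mrank indep E"
  then have "card B < card J" using indep_card_le[OF assms(1) iB] J by auto
  then obtain y where "y \<in> J - B" "indep (insert y B)"
    using assms(1) iB J unfolding matroid_def by blast
  then show False using assms(2) unfolding mbasis_def by blast
qed

lemma augment:
  assumes M: "matroid E indep" and "indep I" "indep B" "card B = n" "mrank indep E = n"
  shows "\<exists>B'. B' \<subseteq> B - I \<and> indep (I \<union> B') \<and> card B' = n - card I"
  using assms(2)
proof (induction "n - card I" arbitrary: I rule: less_induct)
  case less
  have fin: "finite I" "finite B" using M less.prems assms(3) unfolding matroid_def
    by (meson finite_subset)+
  show ?case
  proof (cases "card I < card B")
    case False
    then have "card I = n" using indep_card_le[OF M less.prems] assms by auto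
    then show ?thesis using less.prems by (intro exI[of _ "{}"]) auto
  next
    case True
    then obtain y where y: "y \<in> B - I" "indep (insert y I)"
      using M less.prems assms(3) unfolding matroid_def by blast
    have c: "card (insert y I) = Suc (card I)" using y fin by auto
    have lt: "n - card (insert y I) < n - card I" using c True assms(4) by auto
    from less.hyps[OF lt y(2)] obtain B'' where B'': "B'' \<subseteq> B - insert y I"
        "indep (insert y I \<union> B'')" "card B'' = n - card (insert y I)"
      by blast
    have fB: "finite B''" using B'' fin finite_subset by blast
    have yn: "y \<notin> B''" using B'' by auto
    have "card (insert y B'') = n - card I" using fB yn B''(3) c True assms(4) by simp
    moreover have "insert y B'' \<subseteq> B - I" using B'' y by auto
    moreover have "I \<union> insert y B'' = insert y I \<union> B''" by auto
    ultimately show ?thesis using B''(2) by metis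
  qed
qed
lemma count_step:
  assumes "\<And>i. i \<le> j \<Longrightarrow> finite (C i)"
  shows "card {S \<in> PiE {..<Suc j} C. P (\<Union>i<Suc j. S i)}
       = (\<Sum>T\<in>C j. card {g \<in> PiE {..<j} C. P (T \<union> (\<Union>i<j. g i))})"
proof -
  let ?f = "\<lambda>(y, g). g(j := y)"
  let ?A = "SIGMA T:C j. {g \<in> PiE {..<j} C. P (T \<union> (\<Union>i<j. g i))}"
  have un: "\<And>g y. (\<Union>i<Suc j. (g(j:=y)) i) = y \<union> (\<Union>i<j. g i)"
    by (auto simp: lessThan_Suc)
  have eq: "{S \<in> PiE {..<Suc j} C. P (\<Union>i<Suc j. S i)} = ?f ` ?A"
    by (auto simp: lessThan_Suc PiE_insert_eq un)
  have inj: "inj_on ?f ?A"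
    by (rule inj_on_subset[OF inj_combinator[of j "{..<j}" C]]) auto
  have fin: "finite (C j)" "\<forall>a\<in>C j. finite {g \<in> PiE {..<j} C. P (a \<union> (\<Union>i<j. g i))}"
    using assms by (auto intro!: finite_PiE finite_subset[OF _ finite_PiE[of "{..<j}" C]])
  show ?thesis unfolding eq card_image[OF inj] using card_SigmaI[OF fin] .
qed

lemma main:
  assumes M: "matroid E indep" and rk: "mrank indep E = n"
    and bases: "\<forall>i<k. mbasis indep (B i)"
  shows "j \<le> k \<Longrightarrow> Y \<subseteq> {1..n} \<Longrightarrow> card Y \<le> mrank indep X \<Longrightarrow>
    card {S \<in> PiE {..<j} (\<lambda>i. {T. T \<subseteq> B i \<and> card T = a}). mrank indep (X \<union> (\<Union>i<j. S i)) < k}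
    \<le> card {S \<in> PiE {..<j} (\<lambda>i. {T. T \<subseteq> {1..n} \<and> card T = a}). card (Y \<union> (\<Union>i<j. S i)) < k}"
proof (induction j arbitrary: X Y)
  case 0
  then show ?case by (cases "mrank indep X < k"; cases "card Y < k") auto
next
  case (Suc j)
  define CB where "CB = (\<lambda>i. {T. T \<subseteq> B i \<and> card T = a})"
  define CU where "CU = (\<lambda>i::nat. {T. T \<subseteq> {1..n::nat} \<and> card T = a})"
  have finB: "\<And>i. i < k \<Longrightarrow> finite (B i)"
    using bases M unfolding mbasis_def matroid_def by (meson finite_subset)
  have finCB: "\<And>i. i \<le> j \<Longrightarrow> finite (CB i)"
    unfolding CB_def using finB Suc.prems(1) by (auto intro: finite_subset[of _ "Pow (B _)"])
  have finCU: "\<And>i. i \<le> j \<Longrightarrow> finite (CU i)"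
    unfolding CU_def by (auto intro: finite_subset[of _ "Pow {1..n}"])
  have stepM: "card {S \<in> PiE {..<Suc j} CB. mrank indep (X \<union> (\<Union>i<Suc j. S i)) < k}
     = (\<Sum>T\<in>CB j. card {g \<in> PiE {..<j} CB. mrank indep ((X \<union> T) \<union> (\<Union>i<j. g i)) < k})"
    using count_step[where C=CB and j=j and P="\<lambda>U. mrank indep (X \<union> U) < k", OF finCB] by (simp add: Un_assoc)
  have stepU: "card {S \<in> PiE {..<Suc j} CU. card (Y \<union> (\<Union>i<Suc j. S i)) < k}
     = (\<Sum>T\<in>CU j. card {g \<in> PiE {..<j} CU. card ((Y \<union> T) \<union> (\<Union>i<j. g i)) < k})"
    using count_step[where C=CU and j=j and P="\<lambda>U. card (Y \<union> U) < k", OF finCU] by (simp add: Un_assoc)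
  obtain I where I: "I \<subseteq> X" "indep I" "card I = mrank indep X"
    using mrank_obtain[OF M] by blast
  define r where "r = mrank indep X"
  have jk: "j < k" using Suc.prems by auto
  have Bj: "mbasis indep (B j)" using bases jk by auto
  have iBj: "indep (B j)" using Bj unfolding mbasis_def by auto
  have cBj: "card (B j) = n" using basis_card[OF M Bj] rk by simp
  have fBj: "finite (B j)" using finB jk by auto
  have rn: "r \<le> n" using indep_card_le[OF M I(2)] I rk r_def by simp
  obtain B' where B': "B' \<subseteq> B j - I" "indep (I \<union> B')" "card B' = n - r"
    using augment[OF M I(2) iBj cBj rk] I r_def by auto
  obtain Y' where Y': "Y \<subseteq> Y'" "Y' \<subseteq> {1..n}" "card Y' = r"
    using exists_subset_between[of Y r "{1..n}"] Suc.prems rn r_def by auto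
  have fB': "finite B'" using B' fBj finite_subset by blast
  have fY': "finite Y'" using Y' finite_subset by blast
  have c1: "card B' = card ({1..n} - Y')" using B' Y' fY' by (simp add: card_Diff_subset)
  have c2: "card (B j - B') = card Y'" using B' Y' fB' cBj rn card_Diff_subset[of B' "B j"] by auto
  obtain f1 where f1: "bij_betw f1 B' ({1..n} - Y')"
    using finite_same_card_bij[OF fB' _ c1] by auto
  obtain f2 where f2: "bij_betw f2 (B j - B') Y'"
    using finite_same_card_bij[OF _ fY' c2] fBj by auto
  define h where "h = (\<lambda>x. if x \<in> B' then f1 x else f2 x)"
  have h1: "bij_betw h B' ({1..n} - Y')"
    using f1 by (rule bij_betw_cong[THEN iffD1, rotated]) (simp add: h_def)
  have h2: "bij_betw h (B j - B') Y'"
    using f2 by (rule bij_betw_cong[THEN iffD1, rotated]) (simp add: h_def)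
  have hb: "bij_betw h (B j) {1..n}"
  proof -
    have "bij_betw h (B' \<union> (B j - B')) (({1..n} - Y') \<union> Y')"
      by (rule bij_betw_combine[OF h1 h2]) auto
    moreover have "B' \<union> (B j - B') = B j" using B' by auto
    moreover have "({1..n} - Y') \<union> Y' = {1..n}" using Y' by auto
    ultimately show ?thesis by simp
  qed
  have hinj: "inj_on h (B j)" using hb unfolding bij_betw_def by simp
  have himg: "h ` B j = {1..n}" using hb unfolding bij_betw_def by simp
  have inj2: "inj_on (image h) (CB j)"
    by (rule inj_on_subset[OF inj_on_image_Pow[OF hinj]]) (auto simp: CB_def)
  have img2: "image h ` CB j = CU j"
  proof
    show "image h ` CB j \<subseteq> CU j"
      unfolding CB_def CU_def using himg
      by (auto simp: card_image[OF inj_on_subset[OF hinj]])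
    show "CU j \<subseteq> image h ` CB j"
    proof
      fix U assume U: "U \<in> CU j"
      let ?T = "B j \<inter> h -` U"
      have "h ` ?T = U"
      proof (intro equalityI subsetI)
        fix x assume "x \<in> h ` ?T" then show "x \<in> U" by auto
      next
        fix x assume x: "x \<in> U"
        then have "x \<in> h ` B j" using U himg unfolding CU_def by auto
        then obtain y where y: "y \<in> B j" "x = h y" by auto
        then have "y \<in> ?T" using x by auto
        then show "x \<in> h ` ?T" using y by auto
      qed
      moreover have "card ?T = a"
        using card_image[OF inj_on_subset[OF hinj], of ?T] \<open>h ` ?T = U\<close> U unfolding CU_def by auto
      ultimately show "U \<in> image h ` CB j" unfolding CB_def by (intro image_eqI[of _ _ ?T]) auto
    qed
  qed
  have reidx: "(\<Sum>T\<in>CU j. card {g \<in> PiE {..<j} CU. card ((Y \<union> T) \<union> (\<Union>i<j. g i)) < k})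
     = (\<Sum>T\<in>CB j. card {g \<in> PiE {..<j} CU. card ((Y \<union> h ` T) \<union> (\<Union>i<j. g i)) < k})"
    unfolding img2[symmetric] sum.reindex[OF inj2] by simp
  have le: "card {g \<in> PiE {..<j} CB. mrank indep ((X \<union> T) \<union> (\<Union>i<j. g i)) < k}
     \<le> card {g \<in> PiE {..<j} CU. card ((Y \<union> h ` T) \<union> (\<Union>i<j. g i)) < k}" if T: "T \<in> CB j" for T
  proof -
    have TB: "T \<subseteq> B j" using T unfolding CB_def by auto
    have fT: "finite T" using TB fBj finite_subset by blast
    have sub: "Y \<union> h ` T \<subseteq> {1..n}" using Suc.prems(2) himg TB by auto
    have "h ` (T - B') \<subseteq> Y'" using h2 TB unfolding bij_betw_def by auto
    then have e1: "Y' \<union> h ` T = Y' \<union> h ` (T \<inter> B')" by auto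
    have "card (Y \<union> h ` T) \<le> card (Y' \<union> h ` T)"
      using Y' fT fY' by (intro card_mono) auto
    also have "\<dots> \<le> card Y' + card (h ` (T \<inter> B'))" unfolding e1 by (rule card_Un_le)
    also have "\<dots> \<le> r + card (T \<inter> B')" using card_image_le[of "T \<inter> B'" h] fT Y' by simp
    also have "\<dots> = card (I \<union> (T \<inter> B'))"
    proof -
      have "finite I" using I M unfolding matroid_def by (meson finite_subset)
      moreover have "I \<inter> (T \<inter> B') = {}" using B' by auto
      ultimately show ?thesis using card_Un_disjoint[of I "T \<inter> B'"] fT I r_def by simp
    qed
    also have "\<dots> \<le> mrank indep (X \<union> T)"
    proof (rule mrank_ge[OF M])
      show "I \<union> (T \<inter> B') \<subseteq> X \<union> T" using I by auto
      show "indep (I \<union> (T \<inter> B'))" using B'(2) M unfolding matroid_def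
        by (metis Un_mono inf_le2 order_refl)
    qed
    finally have "card (Y \<union> h ` T) \<le> mrank indep (X \<union> T)" .
    then show ?thesis using Suc.IH[OF _ sub] Suc.prems(1) unfolding CB_def CU_def by simp
  qed
  show ?case
    unfolding CB_def[symmetric] CU_def[symmetric] stepM stepU reidx
    by (rule sum_mono) (rule le)
qed

theorem lemma1p5:
  fixes E :: "'a set" and indep :: "'a set \<Rightarrow> bool" and n k :: nat and B :: "nat \<Rightarrow> 'a set"
  assumes "0 < n" and "0 < k" and "k \<le> n"
    and "matroid E indep"
    and "mrank indep E = n"
    and "\<forall>i<k. mbasis indep (B i)"
  shows "Q_matroid indep B k (alpha n) \<le> Q_uniform k n (alpha n)"
proof -
  let ?a = "alpha n"
  let ?CB = "\<lambda>i. {S. S \<subseteq> B i \<and> card S = ?a}"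
  let ?CU = "\<lambda>i::nat. {S. S \<subseteq> {1..n} \<and> card S = ?a}"
  have num: "card {S \<in> PiE {..<k} ?CB. mrank indep (\<Union>i<k. S i) < k}
      \<le> card {S \<in> PiE {..<k} ?CU. card (\<Union>i<k. S i) < k}"
    using main[OF assms(4) assms(5) assms(6), of k "{}" "{}" ?a] by simp
  have finB: "\<And>i. i < k \<Longrightarrow> finite (B i)"
    using assms(4,6) unfolding mbasis_def matroid_def by (meson finite_subset)
  have d1: "card (PiE {..<k} ?CB) = (\<Prod>i<k. n choose ?a)"
    unfolding card_PiE[OF finite_lessThan]
  proof (intro prod.cong refl)
    fix i assume "i \<in> {..<k}"
    then have "finite (B i)" "card (B i) = n"
      using finB basis_card[OF assms(4)] assms(5,6) by auto
    then show "card (?CB i) = n choose ?a" using n_subsets[of "B i" ?a] by simp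
  qed
  have d2: "card (PiE {..<k} ?CU) = (\<Prod>i<k. n choose ?a)"
    unfolding card_PiE[OF finite_lessThan] by (simp add: n_subsets)
  show ?thesis
    unfolding Q_matroid_def Q_uniform_def tuple_prob_def d1 d2
    using num by (intro divide_right_mono) auto
qed

end
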